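(* Let $r\ge2$ be an integer, $m$ a positive integer with $r<2^m$, and $c\ge1$ real. If $z$ is selected uniformly at random from $\{0,1,\dots,r-1\}$, then the probability that $d=\gcd(r,z)$ is $cm$-smooth is at least $$1-\frac{1}{c\log_2(cm)}.$$
   Context: A positive integer is $cm$-smooth if it is not divisible by any prime power greater than $cm$. Convention: $\gcd(r,0)=r$. *)

theory Defs
  imports "HOL-Analysis.Analysis"
begin

definition smooth :: "real \<Rightarrow> nat \<Rightarrow> bool" where
  "smooth B n \<longleftrightarrow> n > 0 \<and>
     (\<forall>p k. prime p \<and> k \<ge> 1 \<and> p ^ k dvd n \<longrightarrow> real (p ^ k) \<le> B)"

end

theory Submission
  imports Defs
begin

lemma prod_prime_powers_dvd:
  fixes n :: nat
  assumes "finite P" "\<And>p. p \<in> P \<Longrightarrow> prime p" "\<And>p. p \<in> P \<Longrightarrow> p ^ f p dvd n"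
  shows "(\<Prod>p\<in>P. p ^ f p) dvd n"
  using assms
proof (induction P rule: finite_induct)
  case empty then show ?case by simp
next
  case (insert x F)
  have cop: "coprime (x ^ f x) (\<Prod>p\<in>F. p ^ f p)"
  proof (rule prod_coprime_right)
    fix p assume "p \<in> F"
    then have "x \<noteq> p" "prime x" "prime p" using insert by auto
    then have "coprime x p" using primes_coprime by blast
    then show "coprime (x ^ f x) (p ^ f p)" by simp
  qed
  have "(\<Prod>p\<in>F. p ^ f p) dvd n" using insert by auto
  moreover have "x ^ f x dvd n" using insert by auto
  ultimately have "x ^ f x * (\<Prod>p\<in>F. p ^ f p) dvd n" using cop divides_mult by blast
  then show ?case using insert by simp
qed

lemma card_multiples:
  fixes q r :: nat
  assumes "q > 0" "q dvd r"
  shows "card {z \<in> {0..<r}. q dvd z} \<le> r div q"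
proof -
  have "{z \<in> {0..<r}. q dvd z} \<subseteq> (\<lambda>i. q * i) ` {..<r div q}"
  proof
    fix z assume z: "z \<in> {z \<in> {0..<r}. q dvd z}"
    then obtain i where i: "z = q * i" by auto
    obtain s where s: "r = q * s" using assms by auto
    have "q * i < q * s" using z i s by auto
    then have "i < s" by simp
    then show "z \<in> (\<lambda>i. q * i) ` {..<r div q}" using i s assms by auto
  qed
  then have "card {z \<in> {0..<r}. q dvd z} \<le> card ((\<lambda>i. q * i) ` {..<r div q})"
    by (intro card_mono) auto
  also have "\<dots> \<le> r div q" using card_image_le by (metis card_lessThan finite_lessThan)
  finally show ?thesis .
qed

theorem lemma9:
  fixes r m :: nat and c :: real
  assumes "r \<ge> 2" and "m \<ge> 1" and "r < 2 ^ m" and "c \<ge> 1"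
  shows "real (card {z \<in> {0..<r}. smooth (c * real m) (gcd r z)}) / real r
           \<ge> 1 - 1 / (c * log 2 (c * real m))"
proof -
  define B where "B = c * real m"
  have m2: "m \<ge> 2"
  proof (rule ccontr)
    assume "\<not> m \<ge> 2" then have "m = 1" using assms by auto
    then show False using assms by auto
  qed
  have B2: "B \<ge> 2"
  proof -
    have "real m \<ge> 2" using m2 by simp
    then have "c * real m \<ge> 1 * 2" using assms(4) by (intro mult_mono) auto
    then show ?thesis unfolding B_def by simp
  qed
  define k where "k p = (LEAST j. B < real (p ^ j))" for p :: nat
  have kex: "\<exists>j. B < real (p ^ j)" if "prime p" for p
  proof -
    have "1 < real p" using prime_gt_1_nat[OF that] by simp
    from real_arch_pow[OF this] obtain n where "B < real p ^ n" by blast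
    then show ?thesis by auto
  qed
  have kB: "B < real (p ^ k p)" if "prime p" for p
    unfolding k_def using LeastI_ex[OF kex[OF that]] .
  have kmin: "k p \<le> j" if "B < real (p ^ j)" for p j
    unfolding k_def using Least_le that by metis
  have kpos: "k p \<ge> 1" if "prime p" for p
  proof (rule ccontr)
    assume "\<not> k p \<ge> 1" then have "k p = 0" by simp
    then show False using kB[OF that] B2 by simp
  qed
  define P where "P = {p. prime p \<and> p ^ k p dvd r}"
  have Psub: "P \<subseteq> {..r}"
  proof
    fix p assume "p \<in> P"
    then have "prime p" "p ^ k p dvd r" by (auto simp: P_def)
    then have "p dvd r" using kpos dvd_power[of "k p" p] dvd_trans
      by (metis (no_types, lifting) One_nat_def Suc_le_eq not_gr0 power_eq_0_iff)
    then show "p \<in> {..r}" using assms by (auto dest: dvd_imp_le)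
  qed
  have finP: "finite P" using Psub finite_subset by blast
  define bad where "bad = {z \<in> {0..<r}. \<not> smooth B (gcd r z)}"
  have bad_sub: "bad \<subseteq> (\<Union>p\<in>P. {z \<in> {0..<r}. p ^ k p dvd z})"
  proof
    fix z assume "z \<in> bad"
    then have z: "z < r" "\<not> smooth B (gcd r z)" by (auto simp: bad_def)
    have "gcd r z > 0" using assms by simp
    then obtain p j where pj: "prime p" "j \<ge> 1" "p ^ j dvd gcd r z" "\<not> real (p ^ j) \<le> B"
      using z(2) unfolding smooth_def by blast
    have "k p \<le> j" using kmin pj by simp
    then have "p ^ k p dvd p ^ j" by (simp add: le_imp_power_dvd)
    then have "p ^ k p dvd r" "p ^ k p dvd z" using pj(3) dvd_trans by auto
    then show "z \<in> (\<Union>p\<in>P. {z \<in> {0..<r}. p ^ k p dvd z})"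
      using pj z by (auto simp: P_def)
  qed
  have "card bad \<le> card (\<Union>p\<in>P. {z \<in> {0..<r}. p ^ k p dvd z})"
    by (intro card_mono bad_sub) (auto simp: finP)
  also have "\<dots> \<le> (\<Sum>p\<in>P. card {z \<in> {0..<r}. p ^ k p dvd z})"
    by (rule card_UN_le[OF finP])
  finally have cb: "real (card bad) \<le> (\<Sum>p\<in>P. real (card {z \<in> {0..<r}. p ^ k p dvd z}))"
    by (metis of_nat_le_iff of_nat_sum)
  also have "\<dots> \<le> (\<Sum>p\<in>P. real r / B)"
  proof (rule sum_mono)
    fix p assume pP: "p \<in> P"
    then have pr: "prime p" "p ^ k p dvd r" by (auto simp: P_def)
    have qpos: "p ^ k p > 0" using pr prime_gt_0_nat by simp
    have "real (card {z \<in> {0..<r}. p ^ k p dvd z}) \<le> real (r div p ^ k p)"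
      using card_multiples[OF qpos pr(2)] by simp
    also have "\<dots> = real r / real (p ^ k p)" using pr(2) by (simp add: real_of_nat_div)
    also have "\<dots> \<le> real r / B"
      using kB[OF pr(1)] B2 prime_gt_0_nat[OF pr(1)] by (intro divide_left_mono) (auto intro!: mult_pos_pos)
    finally show "real (card {z \<in> {0..<r}. p ^ k p dvd z}) \<le> real r / B" .
  qed
  finally have cb2: "real (card bad) \<le> real (card P) * real r / B" by simp
  have "(\<Prod>p\<in>P. p ^ k p) dvd r"
    by (rule prod_prime_powers_dvd) (use finP in \<open>auto simp: P_def\<close>)
  then have "(\<Prod>p\<in>P. p ^ k p) \<le> r" using assms by (intro dvd_imp_le) auto
  then have "real (\<Prod>p\<in>P. p ^ k p) \<le> real r" by linarith
  moreover have "B ^ card P \<le> real (\<Prod>p\<in>P. p ^ k p)"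
  proof -
    have "B ^ card P = (\<Prod>p\<in>P. B)" by simp
    also have "\<dots> \<le> (\<Prod>p\<in>P. real (p ^ k p))"
      using B2 kB by (intro prod_mono) (auto simp: P_def intro: less_imp_le)
    finally show ?thesis by simp
  qed
  moreover have "real r < real (2 ^ m)" using assms(3) by (simp only: of_nat_less_iff)
  ultimately have "B ^ card P < real (2 ^ m)" by linarith
  then have B2m: "B ^ card P < 2 ^ m" by simp
  have Bp: "0 < B ^ card P" using B2 by simp
  have "log 2 (B ^ card P) < log 2 (2 ^ m)"
    using B2m Bp by (simp only: log_less_cancel_iff)
  then have logb: "real (card P) * log 2 B < real m"
    using B2 by (simp add: log_nat_power)
  have lB: "log 2 B > 0" using B2 by simp
  have "real (card P) \<le> real m / log 2 B" using logb lB by (simp add: pos_le_divide_eq)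
  have good: "{z \<in> {0..<r}. smooth B (gcd r z)} = {0..<r} - bad" by (auto simp: bad_def)
  have "card ({0..<r} - bad) = r - card bad"
    by (subst card_Diff_subset) (auto simp: bad_def)
  moreover have "card bad \<le> r"
  proof -
    have "card bad \<le> card {0..<r}" by (rule card_mono) (auto simp: bad_def)
    then show ?thesis by simp
  qed
  ultimately have cg: "real (card {z \<in> {0..<r}. smooth B (gcd r z)}) = real r - real (card bad)"
    using good by simp
  have rpos: "real r > 0" using assms by simp
  have "real (card {z \<in> {0..<r}. smooth B (gcd r z)}) / real r = 1 - real (card bad) / real r"
    using cg rpos by (simp add: field_simps)
  moreover have "real (card bad) / real r \<le> real (card P) / B"
  proof -
    have "real (card bad) / real r \<le> (real (card P) * real r / B) / real r"
      using cb2 rpos by (intro divide_right_mono) auto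
    also have "\<dots> = real (card P) / B" using rpos by simp
    finally show ?thesis .
  qed
  moreover have "real (card P) / B \<le> 1 / (c * log 2 B)"
  proof -
    have "real (card P) / B \<le> (real m / log 2 B) / B"
      using \<open>real (card P) \<le> real m / log 2 B\<close> B2 by (intro divide_right_mono) auto
    also have "\<dots> = 1 / (c * log 2 B)"
      using assms m2 lB unfolding B_def by (simp add: field_simps)
    finally show ?thesis .
  qed
  ultimately show ?thesis unfolding B_def by linarith
qed

end
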